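(* Fix $0<\gamma_1<\gamma_2$, $c\ge0$ and $d\ge0$, and let $\varphi(t)=D_{\gamma_1}(t)-cD_{\gamma_2}(t)+d$. Then: 1. The equation $\varphi(t)=0$ has a unique solution $t\in[\gamma_1,\gamma_2]$ if and only if $d\le cD_{\gamma_2}(\gamma_1)$. 2. If $d> cD_{\gamma_2}(\gamma_1)$, then the smallest value of $\varphi(t)$ over $t\in[\gamma_1,\gamma_2]$ is attained at $t=\gamma_1$ and equals $-cD_{\gamma_2}(\gamma_1)+d>0$. 3. If $d\le cD_{\gamma_2}(\gamma_1)$, the solution $t^*$ of $\varphi(t)=0$ in $[\gamma_1,\gamma_2]$ is given by $t^*=\dfrac{\gamma_2-\gamma_1-d}{\log(\gamma_2/\gamma_1)}$ when $c=1$, and when $c\neq1$ by $$t^*=\gamma_1^{1/(1-c)}\gamma_2^{-c/(1-c)}e^{z^*+1}=-\frac{\gamma_1+d-c\gamma_2}{(1-c)z^*},$$ where $z^*$ is a solution (given by an appropriate real branch of the Lambert $W$-function) of $$ze^z=-\frac1e\cdot\frac{1}{1-c}\Big(1+\frac{d-c\gamma_2}{\gamma_1}\Big)\Big(\frac{\gamma_2}{\gamma_1}\Big)^{c/(1-c)}.$$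
   Context: For $\gamma>0$ and $t\ge0$, $D_\gamma(t)=t\log(t/\gamma)-t+\gamma$ (natural logarithm). The Lambert $W$-function solves $W(x)e^{W(x)}=x$ for $x\ge-1/e$ and has two real branches $W_0$ (values $\ge-1$) and $W_{-1}$ (values $\le -1$). *)

theory Defs
  imports Complex_Main
begin

text \<open>Relative-entropy-type function: D_gamma(t) = t log(t/gamma) - t + gamma (natural log).
  For t = 0 Isabelle's convention ln 0 = 0 gives 0 * ln 0 = 0, matching the usual convention.\<close>
definition D :: "real \<Rightarrow> real \<Rightarrow> real" where
  "D \<gamma> t = t * ln (t / \<gamma>) - t + \<gamma>"

text \<open>The two real branches of the Lambert W function (meaningful for x \<ge> -1/e).\<close>
definition lambertW0 :: "real \<Rightarrow> real" where
  "lambertW0 x = (THE w. w \<ge> -1 \<and> w * exp w = x)"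

definition lambertWm1 :: "real \<Rightarrow> real" where
  "lambertWm1 x = (THE w. w \<le> -1 \<and> w * exp w = x)"

end

theory Submission
  imports Defs
begin
lemma we_deriv: "((\<lambda>w::real. w * exp w) has_real_derivative ((1 + x) * exp x)) (at x)"
  by (auto intro!: derivative_eq_intros simp: algebra_simps)

lemma we_mono: fixes a b :: real assumes "-1 \<le> a" "a < b" shows "a * exp a < b * exp b"
proof (rule DERIV_pos_imp_increasing_open[OF assms(2)])
  fix x assume "a < x" "x < b"
  then show "\<exists>y. ((\<lambda>w. w * exp w) has_real_derivative y) (at x) \<and> 0 < y"
    using assms we_deriv by (intro exI[of _ "(1 + x) * exp x"]) auto
next
  show "continuous_on {a..b} (\<lambda>w::real. w * exp w)" by (intro continuous_intros)
qed

lemma we_anti: fixes a b :: real assumes "b \<le> -1" "a < b" shows "a * exp a > b * exp b"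
proof (rule DERIV_neg_imp_decreasing_open[OF assms(2)])
  fix x assume "a < x" "x < b"
  then show "\<exists>y. ((\<lambda>w. w * exp w) has_real_derivative y) (at x) \<and> y < 0"
    using assms we_deriv by (intro exI[of _ "(1 + x) * exp x"]) (auto simp: mult_neg_pos)
next
  show "continuous_on {a..b} (\<lambda>w::real. w * exp w)" by (intro continuous_intros)
qed

lemma W0_eq: fixes z :: real assumes "-1 \<le> z" shows "lambertW0 (z * exp z) = z"
  unfolding lambertW0_def
proof (rule the_equality)
  fix w assume w: "-1 \<le> w \<and> w * exp w = z * exp z"
  show "w = z"
  proof (rule ccontr)
    assume "w \<noteq> z"
    then consider "w < z" | "z < w" by linarith
    then show False using we_mono[of w z] we_mono[of z w] w assms by cases auto
  qed
qed (use assms in auto)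

lemma Wm1_eq: fixes z :: real assumes "z \<le> -1" shows "lambertWm1 (z * exp z) = z"
  unfolding lambertWm1_def
proof (rule the_equality)
  fix w assume w: "w \<le> -1 \<and> w * exp w = z * exp z"
  show "w = z"
  proof (rule ccontr)
    assume "w \<noteq> z"
    then consider "w < z" | "z < w" by linarith
    then show False using we_anti[of w z] we_anti[of z w] w assms by cases auto
  qed
qed (use assms in auto)

lemma D_deriv: fixes g x :: real assumes "0 < g" "0 < x"
  shows "(D g has_real_derivative ln (x / g)) (at x)"
proof -
  have "((\<lambda>t. t * ln (t / g) - t + g) has_real_derivative ln (x / g)) (at x)"
    using assms by (auto intro!: derivative_eq_intros simp: field_simps)
  then show ?thesis unfolding D_def[abs_def] .
qed

theorem lemma6:
  fixes \<gamma>1 \<gamma>2 c d :: real and \<phi> :: "real \<Rightarrow> real"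
  assumes "0 < \<gamma>1" and "\<gamma>1 < \<gamma>2" and "c \<ge> 0" and "d \<ge> 0"
    and \<phi>_def: "\<phi> = (\<lambda>t. D \<gamma>1 t - c * D \<gamma>2 t + d)"
  shows "((\<exists>!t. t \<in> {\<gamma>1..\<gamma>2} \<and> \<phi> t = 0) \<longleftrightarrow> d \<le> c * D \<gamma>2 \<gamma>1)
    \<and> (d > c * D \<gamma>2 \<gamma>1 \<longrightarrow>
           (\<forall>t\<in>{\<gamma>1..\<gamma>2}. \<phi> \<gamma>1 \<le> \<phi> t) \<and> \<phi> \<gamma>1 = - c * D \<gamma>2 \<gamma>1 + d \<and> - c * D \<gamma>2 \<gamma>1 + d > 0)
    \<and> (d \<le> c * D \<gamma>2 \<gamma>1 \<longrightarrow> (\<forall>t\<in>{\<gamma>1..\<gamma>2}. \<phi> t = 0 \<longrightarrow>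
           (c = 1 \<longrightarrow> t = (\<gamma>2 - \<gamma>1 - d) / ln (\<gamma>2 / \<gamma>1)) \<and>
           (c \<noteq> 1 \<longrightarrow>
              (\<exists>z. z * exp z = - (1 / exp 1) * (1 / (1 - c)) * (1 + (d - c * \<gamma>2) / \<gamma>1)
                                  * (\<gamma>2 / \<gamma>1) powr (c / (1 - c))
                 \<and> (z = lambertW0 (z * exp z) \<or> z = lambertWm1 (z * exp z))
                 \<and> t = \<gamma>1 powr (1 / (1 - c)) * \<gamma>2 powr (- c / (1 - c)) * exp (z + 1)
                 \<and> (z \<noteq> 0 \<longrightarrow> t = - (\<gamma>1 + d - c * \<gamma>2) / ((1 - c) * z))))))"
proof -
  note g1 = assms(1) and g12 = assms(2)
  have g2: "0 < \<gamma>2" using g1 g12 by linarith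
  have der: "(\<phi> has_real_derivative (ln (x / \<gamma>1) - c * ln (x / \<gamma>2))) (at x)" if "0 < x" for x
    unfolding \<phi>_def using D_deriv[OF g1 that] D_deriv[OF g2 that]
    by (auto intro!: derivative_eq_intros)
  have cont: "continuous_on {a..b} \<phi>" if "\<gamma>1 \<le> a" for a b
  proof (intro continuous_at_imp_continuous_on ballI)
    fix x assume "x \<in> {a..b}"
    then have "0 < x" using g1 that by auto
    then show "isCont \<phi> x" using der DERIV_isCont by blast
  qed
  have mono: "\<phi> a < \<phi> b" if "\<gamma>1 \<le> a" "a < b" "b \<le> \<gamma>2" for a b
  proof (rule DERIV_pos_imp_increasing_open[OF that(2) _ cont[OF that(1)]])
    fix x assume x: "a < x" "x < b"
    have "0 < ln (x / \<gamma>1)" using x that g1 by simp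
    moreover have "ln (x / \<gamma>2) < 0" using x that g1 g2 by simp
    ultimately have "0 < ln (x / \<gamma>1) - c * ln (x / \<gamma>2)"
    proof -
      have "c * ln (x / \<gamma>2) \<le> 0" using assms(3) \<open>ln (x / \<gamma>2) < 0\<close>
        by (intro mult_nonneg_nonpos) auto
      then show ?thesis using \<open>0 < ln (x / \<gamma>1)\<close> by linarith
    qed
    then show "\<exists>y. (\<phi> has_real_derivative y) (at x) \<and> 0 < y"
      using der[of x] x that g1 by auto
  qed
  have mono': "\<phi> a \<le> \<phi> b" if "\<gamma>1 \<le> a" "a \<le> b" "b \<le> \<gamma>2" for a b
    using mono[of a b] that by (cases "a = b") auto
  have phi1: "\<phi> \<gamma>1 = - c * D \<gamma>2 \<gamma>1 + d" unfolding \<phi>_def D_def by simp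
  have lnlt: "ln (\<gamma>1 / \<gamma>2) < \<gamma>1 / \<gamma>2 - 1"
  proof -
    have p: "0 < \<gamma>1 / \<gamma>2" using g1 g2 by simp
    have n1: "\<gamma>1 / \<gamma>2 \<noteq> 1" using g12 g2 by (simp add: divide_eq_1_iff)
    have "ln (\<gamma>1 / \<gamma>2) \<noteq> \<gamma>1 / \<gamma>2 - 1" using ln_eq_minus_one[OF p] n1 by blast
    then show ?thesis using ln_le_minus_one[OF p] by linarith
  qed
  have lnle: "ln (\<gamma>2 / \<gamma>1) \<le> \<gamma>2 / \<gamma>1 - 1"
    using ln_le_minus_one[of "\<gamma>2 / \<gamma>1"] g1 g2 by simp
  have lnsw: "ln (\<gamma>2 / \<gamma>1) = - ln (\<gamma>1 / \<gamma>2)" using g1 g2 by (simp add: ln_div)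
  have "\<gamma>2 * (\<gamma>1 / \<gamma>2 - 1) = \<gamma>1 - \<gamma>2" using g2 by (simp add: field_simps)
  hence "\<gamma>2 * ln (\<gamma>1 / \<gamma>2) < \<gamma>1 - \<gamma>2" using lnlt g2
    by (metis mult_strict_left_mono)
  hence D12: "D \<gamma>1 \<gamma>2 > 0" unfolding D_def using lnsw by simp
  have "\<gamma>1 * (\<gamma>2 / \<gamma>1 - 1) = \<gamma>2 - \<gamma>1" using g1 by (simp add: field_simps)
  hence "\<gamma>1 * ln (\<gamma>2 / \<gamma>1) \<le> \<gamma>2 - \<gamma>1" using lnle g1
    by (metis mult_left_mono less_imp_le)
  hence D21: "D \<gamma>2 \<gamma>1 \<ge> 0" unfolding D_def using lnsw by simp
  have phi2: "\<phi> \<gamma>2 > 0" unfolding \<phi>_def using D12 assms(4) g2 by (simp add: D_def)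
  have P1: "(\<exists>!t. t \<in> {\<gamma>1..\<gamma>2} \<and> \<phi> t = 0) \<longleftrightarrow> d \<le> c * D \<gamma>2 \<gamma>1"
  proof
    assume "\<exists>!t. t \<in> {\<gamma>1..\<gamma>2} \<and> \<phi> t = 0"
    then obtain t where t: "t \<in> {\<gamma>1..\<gamma>2}" "\<phi> t = 0" by auto
    then have "\<phi> \<gamma>1 \<le> 0" using mono'[of \<gamma>1 t] by auto
    then show "d \<le> c * D \<gamma>2 \<gamma>1" using phi1 by simp
  next
    assume h: "d \<le> c * D \<gamma>2 \<gamma>1"
    have "\<exists>t\<ge>\<gamma>1. t \<le> \<gamma>2 \<and> \<phi> t = 0"
      by (rule IVT') (use h phi1 phi2 g12 cont[of \<gamma>1 \<gamma>2] in auto)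
    then obtain t where t: "t \<in> {\<gamma>1..\<gamma>2}" "\<phi> t = 0" by auto
    show "\<exists>!t. t \<in> {\<gamma>1..\<gamma>2} \<and> \<phi> t = 0"
    proof (rule ex1I[of _ t])
      fix s assume s: "s \<in> {\<gamma>1..\<gamma>2} \<and> \<phi> s = 0"
      show "s = t"
      proof (rule ccontr)
        assume "s \<noteq> t"
        then consider "s < t" | "t < s" by linarith
        then show False using mono[of s t] mono[of t s] s t by cases auto
      qed
    qed (use t in auto)
  qed
  have P2: "d > c * D \<gamma>2 \<gamma>1 \<longrightarrow>
           (\<forall>t\<in>{\<gamma>1..\<gamma>2}. \<phi> \<gamma>1 \<le> \<phi> t) \<and> \<phi> \<gamma>1 = - c * D \<gamma>2 \<gamma>1 + d \<and> - c * D \<gamma>2 \<gamma>1 + d > 0"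
    using mono'[of \<gamma>1] phi1 by (auto simp del: phi1)
  have P3: "(c = 1 \<longrightarrow> t = (\<gamma>2 - \<gamma>1 - d) / ln (\<gamma>2 / \<gamma>1)) \<and>
           (c \<noteq> 1 \<longrightarrow>
              (\<exists>z. z * exp z = - (1 / exp 1) * (1 / (1 - c)) * (1 + (d - c * \<gamma>2) / \<gamma>1)
                                  * (\<gamma>2 / \<gamma>1) powr (c / (1 - c))
                 \<and> (z = lambertW0 (z * exp z) \<or> z = lambertWm1 (z * exp z))
                 \<and> t = \<gamma>1 powr (1 / (1 - c)) * \<gamma>2 powr (- c / (1 - c)) * exp (z + 1)
                 \<and> (z \<noteq> 0 \<longrightarrow> t = - (\<gamma>1 + d - c * \<gamma>2) / ((1 - c) * z))))"
    if t: "t \<in> {\<gamma>1..\<gamma>2}" "\<phi> t = 0" for t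
  proof -
    have tpos: "0 < t" using t g1 by auto
    have eq: "t * (ln t - ln \<gamma>1) - t + \<gamma>1 - c * (t * (ln t - ln \<gamma>2) - t + \<gamma>2) + d = 0"
      using t(2) tpos g1 g2 unfolding \<phi>_def D_def by (simp add: ln_div)
    have L: "ln (\<gamma>2 / \<gamma>1) = ln \<gamma>2 - ln \<gamma>1" using g1 g2 by (simp add: ln_div)
    have Lpos: "ln (\<gamma>2 / \<gamma>1) > 0" using g1 g12 by simp
    show ?thesis
    proof (intro conjI impI)
      assume c1: "c = 1"
      have "t * ln (\<gamma>2 / \<gamma>1) = \<gamma>2 - \<gamma>1 - d" using eq c1 unfolding L by (simp add: algebra_simps)
      then show "t = (\<gamma>2 - \<gamma>1 - d) / ln (\<gamma>2 / \<gamma>1)" using Lpos by (simp add: field_simps)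
    next
      assume c1: "c \<noteq> 1"
      define A where "A = \<gamma>1 powr (1 / (1 - c)) * \<gamma>2 powr (- c / (1 - c))"
      have Apos: "A > 0" unfolding A_def using g1 g2 by simp
      have lnA: "ln A = (ln \<gamma>1 - c * ln \<gamma>2) / (1 - c)"
      proof -
        have "ln A = (1 / (1 - c)) * ln \<gamma>1 + (- c / (1 - c)) * ln \<gamma>2"
          unfolding A_def using g1 g2 by (simp add: ln_mult ln_powr)
        also have "\<dots> = (ln \<gamma>1 - c * ln \<gamma>2) / (1 - c)"
          by (simp add: diff_divide_distrib)
        finally show ?thesis .
      qed
      define z where "z = ln t - ln A - 1"
      have ez: "exp (z + 1) = t / A" unfolding z_def using tpos Apos
        by (simp add: exp_diff)
      have tA: "t = A * exp (z + 1)" using ez Apos by simp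
      have zt: "(1 - c) * (z * t) = - (\<gamma>1 + d - c * \<gamma>2)"
      proof -
        have "(1 - c) * ln A = ln \<gamma>1 - c * ln \<gamma>2" using lnA c1 by simp
        then have h2: "t * ln A - c * (t * ln A) = t * ln \<gamma>1 - c * (t * ln \<gamma>2)"
        proof -
          have "t * ln A - c * (t * ln A) = t * ((1 - c) * ln A)" by (simp add: algebra_simps)
          also have "\<dots> = t * (ln \<gamma>1 - c * ln \<gamma>2)" using \<open>(1 - c) * ln A = _\<close> by simp
          also have "\<dots> = t * ln \<gamma>1 - c * (t * ln \<gamma>2)" by (simp add: algebra_simps)
          finally show ?thesis .
        qed
        have g: "(1 - c) * (z * t) = t * ln t - c * (t * ln t) - (t * ln A - c * (t * ln A)) - t + c * t"
          unfolding z_def by (simp add: algebra_simps)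
        have e2: "t * ln t - t * ln \<gamma>1 - t + \<gamma>1 - c * (t * ln t) + c * (t * ln \<gamma>2) + c * t - c * \<gamma>2 + d = 0"
          using eq by (simp add: algebra_simps)
        show ?thesis unfolding g h2 using e2 by linarith
      qed
      have zt': "z * t = - (\<gamma>1 + d - c * \<gamma>2) / (1 - c)" using zt c1
        by (simp add: field_simps)
      have invA: "(\<gamma>2 / \<gamma>1) powr (c / (1 - c)) / \<gamma>1 = 1 / A"
      proof -
        have e1: "ln ((\<gamma>2 / \<gamma>1) powr (c / (1 - c)) / \<gamma>1) = (c / (1 - c)) * (ln \<gamma>2 - ln \<gamma>1) - ln \<gamma>1"
          using g1 g2 by (simp add: ln_div ln_powr)
        have e2: "ln (1 / A) = - ((ln \<gamma>1 - c * ln \<gamma>2) / (1 - c))"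
          using Apos lnA by (simp add: ln_div)
        have e3: "(c / (1 - c)) * (x2 - x1) - x1 = - ((x1 - c * x2) / (1 - c))" for x1 x2 :: real
          using c1 by (simp add: field_simps)
        have "ln ((\<gamma>2 / \<gamma>1) powr (c / (1 - c)) / \<gamma>1) = ln (1 / A)"
          unfolding e1 e2 e3 ..
        then show ?thesis using g1 g2 Apos by (simp add: ln_inj_iff)
      qed
      have "exp z = t / A / exp 1" using ez Apos by (simp add: exp_add eq_divide_eq mult_ac)
      then have "z * exp z = (z * t) / (A * exp 1)" by simp
      also have "\<dots> = - (1 / exp 1) * (1 / (1 - c)) * (\<gamma>1 + d - c * \<gamma>2) * (1 / A)"
        unfolding zt' using c1 Apos by (simp add: field_simps)
      also have "\<dots> = - (1 / exp 1) * (1 / (1 - c)) * ((\<gamma>1 + d - c * \<gamma>2) / \<gamma>1)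
                         * (\<gamma>2 / \<gamma>1) powr (c / (1 - c))"
        unfolding invA[symmetric] by simp
      also have "(\<gamma>1 + d - c * \<gamma>2) / \<gamma>1 = 1 + (d - c * \<gamma>2) / \<gamma>1"
        using g1 by (simp add: field_simps)
      finally have zeq: "z * exp z = - (1 / exp 1) * (1 / (1 - c)) * (1 + (d - c * \<gamma>2) / \<gamma>1)
                                  * (\<gamma>2 / \<gamma>1) powr (c / (1 - c))" .
      have br: "z = lambertW0 (z * exp z) \<or> z = lambertWm1 (z * exp z)"
        using W0_eq[of z] Wm1_eq[of z] by linarith
      show "\<exists>z. z * exp z = - (1 / exp 1) * (1 / (1 - c)) * (1 + (d - c * \<gamma>2) / \<gamma>1)
                                  * (\<gamma>2 / \<gamma>1) powr (c / (1 - c))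
                 \<and> (z = lambertW0 (z * exp z) \<or> z = lambertWm1 (z * exp z))
                 \<and> t = \<gamma>1 powr (1 / (1 - c)) * \<gamma>2 powr (- c / (1 - c)) * exp (z + 1)
                 \<and> (z \<noteq> 0 \<longrightarrow> t = - (\<gamma>1 + d - c * \<gamma>2) / ((1 - c) * z))"
      proof (intro exI[of _ z] conjI impI)
        show "t = \<gamma>1 powr (1 / (1 - c)) * \<gamma>2 powr (- c / (1 - c)) * exp (z + 1)"
          using tA unfolding A_def .
        assume "z \<noteq> 0"
        then show "t = - (\<gamma>1 + d - c * \<gamma>2) / ((1 - c) * z)"
          using zt c1 by (simp add: field_simps)
      qed (use zeq br in auto)
    qed
  qed
  show ?thesis using P1 P2 P3 by blast
qed

end
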